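(* Let $G$ be a chordal graph with evaporation sequence $L_1,\dots,L_t$ with exception set $X$ (a clique), where $t\ge 2$, and suppose $X\cup L_t$ is a clique. For each connected component $C$ of $G[L_{t-1}]$ let $\hat N(C):=N_G(C)\cap(X\cup L_t)$. Then one of the following holds: (1) there is at most one connected component $C$ of $G[L_{t-1}]$ with $\hat N(C)=X\cup L_t$, and $L_t\subseteq\bigcup\{\hat N(C): C \text{ a component of } G[L_{t-1}],\ \hat N(C)\ne X\cup L_t\}$; (2) there are at least two distinct connected components $C_1,C_2$ of $G[L_{t-1}]$ with $\hat N(C_1)=\hat N(C_2)=X\cup L_t$.
   Context: A vertex is simplicial if its neighborhood is a clique. For a chordal graph $G$ and a clique $X\subseteq V(G)$ (possibly empty), the evaporation sequence of $G$ with exception set $X$ is defined recursively: if $X=V(G)$ it is the empty sequence; otherwise let $L_1$ be the set of simplicial vertices of $G$ that are not in $X$ (this set is always nonempty), and the evaporation sequence is $L_1$ followed by the evaporation sequence of $G-L_1$ with exception set $X$. For $S\subseteq V(G)$, $N_G(S)$ is the set of vertices not in $S$ adjacent to some vertex of $S$. *)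

theory Defs
  imports Main
begin

text \<open>All notions are relativised to V
  (edges with an endpoint outside V are ignored), so the induced subgraph
  on S \<subseteq> V is just (S, E).\<close>

definition sgraph :: "'a set \<Rightarrow> ('a \<Rightarrow> 'a \<Rightarrow> bool) \<Rightarrow> bool" where
  "sgraph V E \<longleftrightarrow> finite V \<and> (\<forall>x\<in>V. \<forall>y\<in>V. E x y \<longrightarrow> E y x) \<and> (\<forall>x\<in>V. \<not> E x x)"

definition is_clique :: "'a set \<Rightarrow> ('a \<Rightarrow> 'a \<Rightarrow> bool) \<Rightarrow> 'a set \<Rightarrow> bool" where
  "is_clique V E S \<longleftrightarrow> S \<subseteq> V \<and> (\<forall>x\<in>S. \<forall>y\<in>S. x \<noteq> y \<longrightarrow> E x y)"

definition chordal :: "'a set \<Rightarrow> ('a \<Rightarrow> 'a \<Rightarrow> bool) \<Rightarrow> bool" where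
  "chordal V E \<longleftrightarrow>
     (\<forall>xs. distinct xs \<and> length xs \<ge> 4 \<and> set xs \<subseteq> V
        \<and> (\<forall>i. Suc i < length xs \<longrightarrow> E (xs ! i) (xs ! Suc i))
        \<and> E (last xs) (hd xs)
      \<longrightarrow> (\<exists>i j. i < j \<and> j < length xs \<and> j \<noteq> Suc i
                 \<and> \<not> (i = 0 \<and> j = length xs - 1) \<and> E (xs ! i) (xs ! j)))"

definition simplicial :: "'a set \<Rightarrow> ('a \<Rightarrow> 'a \<Rightarrow> bool) \<Rightarrow> 'a \<Rightarrow> bool" where
  "simplicial V E v \<longleftrightarrow> v \<in> V \<and> is_clique V E {u \<in> V. E v u}"

inductive evap :: "'a set \<Rightarrow> ('a \<Rightarrow> 'a \<Rightarrow> bool) \<Rightarrow> 'a set \<Rightarrow> 'a set list \<Rightarrow> bool" where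
  evap_Nil: "X = V \<Longrightarrow> evap V E X []"
| evap_Cons: "X \<noteq> V \<Longrightarrow> L = {v \<in> V - X. simplicial V E v} \<Longrightarrow> evap (V - L) E X Ls
     \<Longrightarrow> evap V E X (L # Ls)"

definition nbhd :: "'a set \<Rightarrow> ('a \<Rightarrow> 'a \<Rightarrow> bool) \<Rightarrow> 'a set \<Rightarrow> 'a set" where
  "nbhd V E S = {v \<in> V - S. \<exists>u\<in>S \<inter> V. E u v}"

definition components :: "('a \<Rightarrow> 'a \<Rightarrow> bool) \<Rightarrow> 'a set \<Rightarrow> 'a set set" where
  "components E S = {{y. (\<lambda>a b. a \<in> S \<and> b \<in> S \<and> E a b)\<^sup>*\<^sup>* x y} | x. x \<in> S}"

end

theory Submission
  imports Defs
begin

inductive_cases evapConsE: "evap V E X (L#Ls)"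
inductive_cases evapNilE: "evap V E X []"

lemma evap_last2:
  assumes "evap V E X Ls" "length Ls \<ge> 2"
  shows "\<exists>V'. V' \<subseteq> V \<and> evap V' E X [Ls!(length Ls - 2), last Ls]"
  using assms
proof (induction rule: evap.induct)
  case (evap_Nil X V E) then show ?case by simp
next
  case (evap_Cons X V L E Ls)
  show ?case
  proof (cases "length Ls \<ge> 2")
    case True
    with evap_Cons.IH obtain V' where "V' \<subseteq> V - L" "evap V' E X [Ls!(length Ls - 2), last Ls]" by blast
    moreover have "(L#Ls)!(length (L#Ls) - 2) = Ls!(length Ls - 2)"
    proof -
      obtain k where "length Ls = Suc (Suc k)" using True by (metis add_2_eq_Suc le_Suc_ex)
      then show ?thesis by simp
    qed
    moreover have "last (L#Ls) = last Ls" using True by auto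
    ultimately show ?thesis by auto
  next
    case False
    with evap_Cons.prems have "length Ls = 1" by simp
    then obtain B where B: "Ls = [B]" by (cases Ls) auto
    have "evap V E X (L#Ls)" using evap_Cons.hyps by (blast intro: evap.evap_Cons)
    then show ?thesis using B by auto
  qed
qed

theorem lemma5p15:
  fixes V :: "'a set" and E :: "'a \<Rightarrow> 'a \<Rightarrow> bool" and X :: "'a set" and Ls :: "'a set list"
  assumes "sgraph V E" and "chordal V E" and "is_clique V E X"
    and "evap V E X Ls" and "length Ls \<ge> 2"
    and "is_clique V E (X \<union> last Ls)"
  shows "((\<forall>C1 \<in> components E (Ls ! (length Ls - 2)). \<forall>C2 \<in> components E (Ls ! (length Ls - 2)).
            nbhd V E C1 \<inter> (X \<union> last Ls) = X \<union> last Ls \<and> nbhd V E C2 \<inter> (X \<union> last Ls) = X \<union> last Ls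
            \<longrightarrow> C1 = C2)
         \<and> last Ls \<subseteq> \<Union>{nbhd V E C \<inter> (X \<union> last Ls) | C. C \<in> components E (Ls ! (length Ls - 2))
                                   \<and> nbhd V E C \<inter> (X \<union> last Ls) \<noteq> X \<union> last Ls})
       \<or> (\<exists>C1 \<in> components E (Ls ! (length Ls - 2)). \<exists>C2 \<in> components E (Ls ! (length Ls - 2)).
            C1 \<noteq> C2 \<and> nbhd V E C1 \<inter> (X \<union> last Ls) = X \<union> last Ls \<and> nbhd V E C2 \<inter> (X \<union> last Ls) = X \<union> last Ls)"
proof -
  define A where "A = Ls ! (length Ls - 2)"
  define B where "B = last Ls"
  define H where "H = X \<union> B"
  obtain V' where V'V: "V' \<subseteq> V" and ev: "evap V' E X [A, B]"
    using evap_last2[OF assms(4,5)] unfolding A_def B_def by blast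
  from ev obtain Vr where hA: "A = {v \<in> V' - X. simplicial V' E v}" and ev2: "evap (V' - A) E X [B]"
    by (auto elim: evapConsE)
  from ev2 have hB: "B = {v \<in> V' - A - X. simplicial (V' - A) E v}" and ev3: "evap (V' - A - B) E X []"
    by (auto elim: evapConsE)
  from ev3 have hX: "X = V' - A - B" by (auto elim: evapNilE)
  have sym: "\<And>x y. x \<in> V \<Longrightarrow> y \<in> V \<Longrightarrow> E x y \<Longrightarrow> E y x" using assms(1) unfolding sgraph_def by blast
  have Hcl: "\<And>x y. x \<in> H \<Longrightarrow> y \<in> H \<Longrightarrow> x \<noteq> y \<Longrightarrow> E x y" using assms(6) unfolding is_clique_def H_def B_def by blast
  have HV': "H = V' - A" using hX hB unfolding H_def by auto
  have AV': "A \<subseteq> V'" using hA by auto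
  have K1: "\<And>u y z. u \<in> A \<Longrightarrow> y \<in> V' \<Longrightarrow> z \<in> V' \<Longrightarrow> E u y \<Longrightarrow> E u z \<Longrightarrow> y \<noteq> z \<Longrightarrow> E y z"
  proof -
    fix u y z assume u: "u \<in> A" and yz: "y \<in> V'" "z \<in> V'" "E u y" "E u z" "y \<noteq> z"
    have "simplicial V' E u" using u hA by blast
    then have "is_clique V' E {w \<in> V'. E u w}" by (simp add: simplicial_def)
    then show "E y z" using yz unfolding is_clique_def by blast
  qed
  define R where "R = (\<lambda>a b. a \<in> A \<and> b \<in> A \<and> E a b)"
  define comp where "comp = (\<lambda>x. {y. R\<^sup>*\<^sup>* x y})"
  have comps: "components E A = {comp x | x. x \<in> A}" unfolding components_def comp_def R_def by simp
  have K2: "\<And>a y. a \<in> A \<Longrightarrow> R\<^sup>*\<^sup>* a y \<Longrightarrow> y \<in> A \<and> (y = a \<or> E a y)"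
  proof -
    fix a y assume a: "a \<in> A" and r: "R\<^sup>*\<^sup>* a y"
    from r show "y \<in> A \<and> (y = a \<or> E a y)"
    proof (induction rule: rtranclp_induct)
      case base then show ?case using a by simp
    next
      case (step y z)
      then have yz: "y \<in> A" "z \<in> A" "E y z" unfolding R_def by auto
      show ?case
      proof (cases "y = a")
        case True then show ?thesis using yz by simp
      next
        case False
        with step have "E a y" by simp
        moreover have "a \<in> V" "y \<in> V" using a yz AV' V'V by auto
        ultimately have "E y a" using sym by metis
        then show ?thesis using K1[of y a z] yz a AV' by blast
      qed
    qed
  qed
  have K3: "\<And>a b u. a \<in> A \<Longrightarrow> b \<in> H \<Longrightarrow> \<not> E a b \<Longrightarrow> u \<in> comp a \<Longrightarrow> \<not> E u b"
  proof
    fix a b u assume a: "a \<in> A" and b: "b \<in> H" and nab: "\<not> E a b" and u: "u \<in> comp a" and ub: "E u b"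
    from K2[OF a] u have uA: "u \<in> A" and "u = a \<or> E a u" unfolding comp_def by auto
    from this(2) show False
    proof
      assume "u = a" then show False using nab ub by simp
    next
      assume "E a u"
      moreover have "a \<in> V" "u \<in> V" using a uA AV' V'V by auto
      ultimately have "E u a" using sym by metis
      moreover have "a \<noteq> b" using a b HV' by auto
      moreover have "a \<in> V'" "b \<in> V'" using a b AV' HV' by auto
      ultimately show False using K1[of u a b] uA ub nab by simp
    qed
  qed
  have compA: "\<And>a. a \<in> A \<Longrightarrow> comp a \<subseteq> A \<and> a \<in> comp a" using K2 unfolding comp_def by auto
  have inN: "\<And>a v. a \<in> A \<Longrightarrow> v \<in> H \<Longrightarrow> E v a \<Longrightarrow> v \<in> nbhd V E (comp a) \<inter> H"
  proof -
    fix a v assume a: "a \<in> A" and v: "v \<in> H" and e: "E v a"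
    have "a \<in> V" "v \<in> V" using a v AV' HV' V'V by auto
    then have "E a v" using sym[OF _ _ e] by metis
    then show "v \<in> nbhd V E (comp a) \<inter> H" using compA[OF a] a v AV' HV' V'V
      unfolding nbhd_def by blast
  qed
  have notfull: "\<And>a b. a \<in> A \<Longrightarrow> b \<in> H \<Longrightarrow> \<not> E a b \<Longrightarrow> nbhd V E (comp a) \<inter> H \<noteq> H"
  proof
    fix a b assume a: "a \<in> A" and b: "b \<in> H" and nab: "\<not> E a b" and eq: "nbhd V E (comp a) \<inter> H = H"
    then have "b \<in> nbhd V E (comp a)" by blast
    then obtain u where "u \<in> comp a" "E u b" unfolding nbhd_def by blast
    then show False using K3[OF a b nab] by blast
  qed
  have main: "((\<forall>C1 \<in> components E A. \<forall>C2 \<in> components E A.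
            nbhd V E C1 \<inter> H = H \<and> nbhd V E C2 \<inter> H = H \<longrightarrow> C1 = C2)
         \<and> B \<subseteq> \<Union>{nbhd V E C \<inter> H | C. C \<in> components E A \<and> nbhd V E C \<inter> H \<noteq> H})
       \<or> (\<exists>C1 \<in> components E A. \<exists>C2 \<in> components E A.
            C1 \<noteq> C2 \<and> nbhd V E C1 \<inter> H = H \<and> nbhd V E C2 \<inter> H = H)"
  proof (cases "\<exists>C1 \<in> components E A. \<exists>C2 \<in> components E A.
            C1 \<noteq> C2 \<and> nbhd V E C1 \<inter> H = H \<and> nbhd V E C2 \<inter> H = H")
    case True then show ?thesis by (rule disjI2)
  next
    case False
    have "B \<subseteq> \<Union>{nbhd V E C \<inter> H | C. C \<in> components E A \<and> nbhd V E C \<inter> H \<noteq> H}"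
    proof
      fix v assume vB: "v \<in> B"
      have vH: "v \<in> H" using vB H_def by simp
      have "v \<in> V' - X" "v \<notin> A" using vB hB by auto
      then have "\<not> simplicial V' E v" using hA by blast
      then obtain a b where ab: "a \<in> V'" "b \<in> V'" "E v a" "E v b" "a \<noteq> b" "\<not> E a b"
        using \<open>v \<in> V' - X\<close> unfolding simplicial_def is_clique_def by blast
      have "a \<in> V" "b \<in> V" using ab V'V by auto
      then have nba: "\<not> E b a" using sym ab(6) by metis
      show "v \<in> \<Union>{nbhd V E C \<inter> H | C. C \<in> components E A \<and> nbhd V E C \<inter> H \<noteq> H}"
      proof (cases "a \<in> A")
        case aA: True
        show ?thesis
        proof (cases "b \<in> A")
          case bA: True
          have ne: "comp a \<noteq> comp b"
          proof
            assume "comp a = comp b"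
            then have "b \<in> comp a" using compA[OF bA] by simp
            then show False using K2[OF aA] ab unfolding comp_def by auto
          qed
          have c1: "comp a \<in> components E A" "comp b \<in> components E A" using comps aA bA by auto
          have "nbhd V E (comp a) \<inter> H \<noteq> H \<or> nbhd V E (comp b) \<inter> H \<noteq> H"
            using False ne c1 by blast
          then show ?thesis using inN[OF aA vH ab(3)] inN[OF bA vH ab(4)] c1 by blast
        next
          case False
          then have bH: "b \<in> H" using ab HV' by simp
          show ?thesis using inN[OF aA vH ab(3)] notfull[OF aA bH ab(6)] comps aA by blast
        qed
      next
        case False
        then have aH: "a \<in> H" using ab HV' by simp
        show ?thesis
        proof (cases "b \<in> A")
          case bA: True
          show ?thesis using inN[OF bA vH ab(4)] notfull[OF bA aH nba] comps bA by blast
        next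
          case False
          then have bH: "b \<in> H" using ab HV' by simp
          then show ?thesis using Hcl[OF aH bH ab(5)] ab(6) by blast
        qed
      qed
    qed
    moreover have "\<forall>C1 \<in> components E A. \<forall>C2 \<in> components E A.
            nbhd V E C1 \<inter> H = H \<and> nbhd V E C2 \<inter> H = H \<longrightarrow> C1 = C2"
      using False by blast
    ultimately show ?thesis by (intro disjI1 conjI)
  qed
  then show ?thesis unfolding A_def B_def H_def .
qed

end
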